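(* Let $\widehat{A} = A + \epsilon B$ with $A, B \in \mathbb{R}^{n\times n}$ and $Ind(\widehat{A}) = k$. Then a dual matrix $\widehat{X} = X + \epsilon R$ with $X,R\in\mathbb{R}^{n\times n}$ is a dual Drazin generalized inverse of $\widehat{A}$ if and only if $X = A^{D}$ and $$A^kA^DB+A^kRA+\Big(\sum_{i=0}^{k-1}A^{k-1-i}BA^{i}\Big)(A^DA-I)=0,$$ $$R=A^{D}AR+A^{D}BA^{D}+RAA^{D},$$ $$AR + BA^{D} = RA + A^DB.$$
   Context: A dual number is $a+\epsilon b$ with $a,b\in\mathbb{R}$, where the dual unit $\epsilon$ satisfies $\epsilon\neq 0$, $\epsilon^2=0$ and commutes with real numbers. A dual matrix is $\widehat{A}=A+\epsilon B$ with $A,B$ real matrices; sums and products are computed formally using $\epsilon^2=0$, e.g. $(A+\epsilon B)(C+\epsilon D)=AC+\epsilon(AD+BC)$, and two dual matrices are equal iff their real parts and their dual parts are equal. $\mathbb{D}^n$ denotes the set of dual column vectors of length $n$. For a square dual matrix $\widehat{A}$, $R(\widehat{A}^k)=\{\widehat{A}^k\widehat{z}:\widehat{z}\in\mathbb{D}^n\}$, and the dual index $Ind(\widehat{A})$ is the smallest nonnegative integer $k$ with $R(\widehat{A}^k)=R(\widehat{A}^{k+1})$. For a real square matrix $A$, $A^D$ denotes its Drazin inverse. For $Ind(\widehat{A})=k$, a dual matrix $\widehat{X}$ is a dual Drazin generalized inverse (DDGI) of $\widehat{A}$ if $\widehat{A}^{k}\widehat{X}\widehat{A} = \widehat{A}^{k}$,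 $\widehat{X}\widehat{A}\widehat{X} = \widehat{X}$ and $\widehat{A}\widehat{X} =\widehat{X}\widehat{A}$. *)

theory Defs
  imports "HOL-Analysis.Analysis"
begin

text \<open>Real n x n matrices are rendered as real^'n^'n (the dimension n = CARD('n)).
A dual matrix A + eps B is represented by the pair (A, B); a dual vector
x + eps y by the pair (x, y).\<close>

type_synonym 'n rmat = "real^'n^'n"
type_synonym 'n dmat = "'n rmat \<times> 'n rmat"
type_synonym 'n dvec = "(real^'n) \<times> (real^'n)"

fun mpow :: "'n::finite rmat \<Rightarrow> nat \<Rightarrow> 'n rmat" where
  "mpow A 0 = mat 1"
| "mpow A (Suc k) = A ** mpow A k"

definition real_index :: "'n::finite rmat \<Rightarrow> nat" where
  "real_index A = (LEAST k. range (\<lambda>z. mpow A k *v z) = range (\<lambda>z. mpow A (Suc k) *v z))"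

definition drazin :: "'n::finite rmat \<Rightarrow> 'n rmat" where
  "drazin A = (THE X. mpow A (real_index A) ** X ** A = mpow A (real_index A)
                      \<and> X ** A ** X = X \<and> A ** X = X ** A)"

text \<open>Dual matrix arithmetic, using eps^2 = 0.\<close>
definition dmult :: "'n::finite dmat \<Rightarrow> 'n dmat \<Rightarrow> 'n dmat" where
  "dmult M N = (fst M ** fst N, fst M ** snd N + snd M ** fst N)"

definition dmultv :: "'n::finite dmat \<Rightarrow> 'n dvec \<Rightarrow> 'n dvec" where
  "dmultv M z = (fst M *v fst z, fst M *v snd z + snd M *v fst z)"

fun dpow :: "'n::finite dmat \<Rightarrow> nat \<Rightarrow> 'n dmat" where
  "dpow M 0 = (mat 1, 0)"
| "dpow M (Suc k) = dmult M (dpow M k)"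

definition drange :: "'n::finite dmat \<Rightarrow> nat \<Rightarrow> 'n dvec set" where
  "drange M k = range (\<lambda>z. dmultv (dpow M k) z)"

definition dual_index :: "'n::finite dmat \<Rightarrow> nat" where
  "dual_index M = (LEAST k. drange M k = drange M (Suc k))"

definition is_DDGI :: "'n::finite dmat \<Rightarrow> 'n dmat \<Rightarrow> bool" where
  "is_DDGI M X \<longleftrightarrow>
     (let k = dual_index M in
       dmult (dmult (dpow M k) X) M = dpow M k
     \<and> dmult (dmult X M) X = X
     \<and> dmult M X = dmult X M)"

end

theory Submission imports Defs begin


lemma comm_pow: "(a::'a::monoid_mult) * x = x * a \<Longrightarrow> a ^ i * x = x * a ^ i"
  by (metis power_commuting_commutes)

lemma comm_pow2: "(a::'a::monoid_mult) * x = x * a \<Longrightarrow> a ^ i * x ^ j = x ^ j * a ^ i"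
  by (metis comm_pow power_commuting_commutes)

lemma comm_mult_pow: "(a::'a::monoid_mult) * x = x * a \<Longrightarrow> (a * x) ^ n = a ^ n * x ^ n"
proof (induction n)
  case 0 then show ?case by simp
next
  case (Suc n)
  have "(a * x) ^ Suc n = a * x * (a ^ n * x ^ n)" using Suc by simp
  also have "\<dots> = a * (x * a ^ n) * x ^ n" by (simp add: mult.assoc)
  also have "\<dots> = a * (a ^ n * x) * x ^ n" using comm_pow[OF Suc.prems] by metis
  also have "\<dots> = a ^ Suc n * x ^ Suc n" by (simp add: mult.assoc)
  finally show ?case .
qed

lemma idem_pow: "(e::'a::monoid_mult) * e = e \<Longrightarrow> e ^ Suc n = e"
  by (induction n) (auto simp: mult.assoc[symmetric])

definition Pd :: "nat \<Rightarrow> 'a::monoid_mult \<Rightarrow> 'a \<Rightarrow> bool" where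
  "Pd r a x \<longleftrightarrow> a ^ r * x * a = a ^ r \<and> x * a * x = x \<and> a * x = x * a"

lemma Pd_suc: "Pd r a x \<longleftrightarrow> a ^ Suc r * x = a ^ r \<and> x * a * x = x \<and> a * x = x * a"
  unfolding Pd_def by (metis mult.assoc power_Suc2)

lemma Pd_mono: assumes "Pd r a x" shows "Pd (r + d) a x"
proof -
  have "a ^ Suc (r + d) * x = a ^ d * (a ^ Suc r * x)"
    by (metis add_Suc_right add.commute mult.assoc power_add)
  also have "\<dots> = a ^ (r + d)" using assms Pd_suc by (metis add.commute power_add)
  finally show ?thesis using assms Pd_suc by blast
qed

lemma Pd_unique_same:
  assumes X: "Pd t a x" and Y: "Pd t a y" shows "x = y"
proof -
  have x1: "a ^ Suc t * x = a ^ t" and x2: "x * a * x = x" and x3: "a * x = x * a"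
    using X Pd_suc by blast+
  have y1: "a ^ Suc t * y = a ^ t" and y2: "y * a * y = y" and y3: "a * y = y * a"
    using Y Pd_suc by blast+
  define e where "e = a * x"
  define f where "f = a * y"
  have ee: "e * e = e" unfolding e_def by (metis mult.assoc x2)
  have ff: "f * f = f" unfolding f_def by (metis mult.assoc y2)
  have e_pow: "e = a ^ Suc t * x ^ Suc t" using comm_mult_pow[OF x3] idem_pow[OF ee] e_def by metis
  have f_pow: "f = y ^ Suc t * a ^ Suc t"
    using comm_mult_pow[OF y3] idem_pow[OF ff] f_def comm_pow2[OF y3] by metis
  have ay: "a ^ Suc (Suc t) * y = a ^ Suc t"
    by (metis mult.assoc power_Suc y1)
  have ax: "a ^ Suc (Suc t) * x = a ^ Suc t"
    by (metis mult.assoc power_Suc x1)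
  have "e = a ^ Suc (Suc t) * y * x ^ Suc t" using e_pow ay by simp
  also have "\<dots> = y * a ^ Suc (Suc t) * x ^ Suc t" using comm_pow[OF y3] by metis
  also have "\<dots> = (y * a) * (a ^ Suc t * x ^ Suc t)" by (simp add: mult.assoc)
  also have "\<dots> = f * e" using e_pow f_def y3 by simp
  finally have e_fe: "e = f * e" .
  have "f * e = y ^ Suc t * (a ^ Suc t * a) * x" using f_pow e_def by (simp add: mult.assoc)
  also have "\<dots> = y ^ Suc t * a ^ Suc t" using ax by (simp add: power_commutes mult.assoc)
  finally have "f * e = f" using f_pow by simp
  then have ef: "e = f" using e_fe by simp
  have "x = x * e" unfolding e_def using x2 by (simp add: mult.assoc)
  also have "\<dots> = x * a * y" using ef f_def by (simp add: mult.assoc)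
  also have "\<dots> = e * y" using x3 e_def by simp
  also have "\<dots> = y" using ef f_def y3 y2 by simp
  finally show ?thesis .
qed

lemma Pd_unique: assumes "Pd r a x" "Pd s a y" shows "x = y"
proof -
  have "Pd (r + s) a x" by (rule Pd_mono[OF assms(1)])
  moreover have "Pd (r + s) a y" using Pd_mono[OF assms(2), of r] by (simp add: add.commute)
  ultimately show ?thesis by (rule Pd_unique_same)
qed

lemma Pd_exists:
  assumes u0: "a ^ m = a ^ Suc m * u" and v0: "a ^ m = v * a ^ Suc m"
  shows "\<exists>z. Pd m a z"
proof -
  have u: "a ^ Suc m * u = a ^ m" using u0 by simp
  have v: "v * a ^ Suc m = a ^ m" using v0 by simp
  have U: "a ^ (m + j) * u ^ j = a ^ m" for j
  proof (induction j)
    case 0 then show ?case by simp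
  next
    case (Suc j)
    have pa: "a ^ (m + Suc j) = a ^ j * a ^ Suc m" by (metis add.commute add_Suc_right power_add)
    have "a ^ (m + Suc j) * u ^ Suc j = a ^ j * (a ^ Suc m * u) * u ^ j"
      unfolding pa by (simp only: mult.assoc power_Suc)
    also have "\<dots> = a ^ (m + j) * u ^ j" unfolding u by (simp only: power_add add.commute)
    finally show ?case using Suc by simp
  qed
  have V: "v ^ j * a ^ (m + j) = a ^ m" for j
  proof (induction j)
    case 0 then show ?case by simp
  next
    case (Suc j)
    have pa: "a ^ (m + Suc j) = a ^ Suc m * a ^ j" by (metis add_Suc_shift power_add)
    have "v ^ Suc j * a ^ (m + Suc j) = v ^ j * (v * a ^ Suc m) * a ^ j"
      unfolding pa by (metis mult.assoc power_Suc2)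
    also have "\<dots> = v ^ j * a ^ (m + j)" unfolding v by (simp only: power_add mult.assoc)
    finally show ?case using Suc by simp
  qed
  define z where "z = a ^ m * u ^ Suc m"
  have uv: "a ^ m * u ^ m = v ^ m * a ^ m"
  proof -
    have "a ^ m * u ^ m = v ^ m * a ^ (m + m) * u ^ m" by (simp only: V)
    also have "\<dots> = v ^ m * a ^ m" by (simp only: U mult.assoc)
    finally show ?thesis .
  qed
  have z2: "z = v ^ Suc m * a ^ m"
  proof -
    have "z = v ^ Suc m * a ^ (m + Suc m) * u ^ Suc m" unfolding z_def by (simp only: V)
    also have "\<dots> = v ^ Suc m * a ^ m" by (simp only: U mult.assoc)
    finally show ?thesis .
  qed
  have az: "a * z = a ^ m * u ^ m"
  proof -
    have "a * z = (a ^ Suc m * u) * u ^ m" unfolding z_def by (simp only: mult.assoc power_Suc)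
    then show ?thesis by (simp only: u)
  qed
  have za: "z * a = v ^ m * a ^ m"
  proof -
    have "z * a = v ^ m * (v * a ^ Suc m)" unfolding z2 by (simp only: mult.assoc power_Suc2)
    then show ?thesis by (simp only: v)
  qed
  have c: "a * z = z * a" using az za uv by simp
  have p1: "a ^ Suc m * z = a ^ m"
  proof -
    have "a ^ Suc m * z = a ^ m * (a * z)" by (simp only: mult.assoc power_Suc2)
    also have "\<dots> = a ^ (m + m) * u ^ m" by (simp only: az mult.assoc power_add)
    finally show ?thesis by (simp only: U)
  qed
  have p2: "z * a * z = z"
  proof -
    have "z * a * z = v ^ m * a ^ m * z" by (simp only: za)
    also have "\<dots> = v ^ m * a ^ m * (a ^ m * u ^ Suc m)" by (simp only: z_def)
    also have "\<dots> = v ^ m * (a ^ (m + m) * u ^ m) * u"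
      by (simp only: mult.assoc power_add power_Suc2)
    also have "\<dots> = a ^ m * u ^ m * u" by (simp only: U uv)
    finally show ?thesis unfolding z_def by (simp only: mult.assoc power_Suc2)
  qed
  show ?thesis using p1 p2 c Pd_suc by blast
qed

typedef ('n::finite) sq = "UNIV :: (real^'n^'n) set" by simp

instantiation sq :: (finite) monoid_mult
begin
definition one_sq_def: "1 = Abs_sq (mat 1)"
definition times_sq_def: "a * b = Abs_sq (Rep_sq a ** Rep_sq b)"
instance
  by standard (auto simp: one_sq_def times_sq_def Abs_sq_inverse Rep_sq_inverse matrix_mul_assoc)
end

lemma sq_mult: "Abs_sq A * Abs_sq B = Abs_sq (A ** B)"
  by (simp add: times_sq_def Abs_sq_inverse)

lemma sq_pow: "Abs_sq A ^ k = Abs_sq (mpow A k)"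
  by (induction k) (auto simp: one_sq_def sq_mult)

lemma sq_inj: "Abs_sq A = Abs_sq B \<longleftrightarrow> A = B"
  by (simp add: Abs_sq_inject)

lemma Pd_mat: "Pd r (Abs_sq A) (Abs_sq X) \<longleftrightarrow>
   (mpow A r ** X ** A = mpow A r \<and> X ** A ** X = X \<and> A ** X = X ** A)"
  by (simp add: Pd_def sq_pow sq_mult sq_inj)

lemma mpow_Suc2: "mpow A (Suc k) = mpow A k ** A"
proof -
  have "Abs_sq (mpow A (Suc k)) = Abs_sq (mpow A k ** A)"
    by (simp only: sq_pow[symmetric] sq_mult[symmetric] power_Suc2)
  then show ?thesis by (simp add: sq_inj)
qed

lemma madd_r: "((A::real^'n^'m) + B) ** C = A ** C + B ** C"
  by (vector matrix_matrix_mult_def sum.distrib[symmetric] field_simps)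

lemma mdiff_l: "(A::real^'n^'m) ** (B - C) = A ** B - A ** C"
  by (vector matrix_matrix_mult_def sum_subtractf[symmetric] field_simps)

lemma msum_l: "finite S \<Longrightarrow> (A::real^'n^'m) ** sum f S = sum (\<lambda>i. A ** f i) S"
  by (induction S rule: finite_induct) (auto simp: matrix_add_ldistrib)

definition RG :: "real^'n^'m \<Rightarrow> (real^'m) set" where
  "RG M = range (\<lambda>z. M *v z)"
lemma RG_mult: "RG (P ** Q) \<subseteq> RG P"
proof
  fix y assume "y \<in> RG (P ** Q)"
  then obtain z where "y = (P ** Q) *v z" unfolding RG_def by blast
  then have "y = P *v (Q *v z)" by (simp add: matrix_vector_mul_assoc)
  then show "y \<in> RG P" unfolding RG_def by blast
qed
lemma subspace_RG: "subspace (RG (M::real^'n^'m))"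
  unfolding RG_def by (rule linear_subspace_image[OF matrix_vector_mul_linear subspace_UNIV])

lemma RG_factor:
  fixes P Q :: "real^'n^'m"
  assumes "RG P \<subseteq> RG Q" shows "\<exists>C. P = Q ** C"
proof -
  have "\<exists>w. Q *v w = P *v axis j 1" for j
  proof -
    have "P *v axis j 1 \<in> RG P" unfolding RG_def by simp
    then have "P *v axis j 1 \<in> RG Q" using assms by blast
    then obtain z where "P *v axis j 1 = Q *v z" unfolding RG_def by blast
    then show ?thesis by (intro exI[of _ z]) (rule sym)
  qed
  then obtain w where w: "\<And>j. Q *v w j = P *v axis j 1" by metis
  define C where "C = (\<chi> i j. w j $ i)"
  have "P $ i $ j = (Q ** C) $ i $ j" for i j
  proof -
    have "P $ i $ j = (P *v axis j 1) $ i" by (simp add: matrix_vector_mult_basis column_def)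
    also have "\<dots> = (Q *v w j) $ i" using w by simp
    also have "\<dots> = (Q ** C) $ i $ j"
      by (simp add: matrix_vector_mult_def matrix_matrix_mult_def C_def)
    finally show ?thesis .
  qed
  then have "P = Q ** C" by (simp add: vec_eq_iff)
  then show ?thesis by blast
qed
lemma dimRG: "dim (RG (M::real^'n^'m)) = rank M"
  by (simp add: RG_def rank_dim_range)

lemma left_factor:
  fixes A :: "real^'n^'n"
  assumes "RG (mpow A m) = RG (mpow A (Suc m))"
  shows "\<exists>V. mpow A m = V ** mpow A (Suc m)"
proof -
  have r: "rank (mpow A m) = rank (mpow A (Suc m))" using assms by (simp add: rank_dim_range RG_def)
  have sub: "RG (transpose (mpow A (Suc m))) \<subseteq> RG (transpose (mpow A m))"
    by (simp add: matrix_transpose_mul RG_mult)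
  have "RG (transpose (mpow A (Suc m))) = RG (transpose (mpow A m))"
    apply (rule subspace_dim_equal[OF subspace_RG subspace_RG sub])
    using r by (simp only: dimRG rank_transpose)
  then obtain C where "transpose (mpow A m) = transpose (mpow A (Suc m)) ** C"
    using RG_factor by blast
  then have "mpow A m = transpose C ** mpow A (Suc m)"
    by (metis matrix_transpose_mul transpose_transpose)
  then show ?thesis by blast
qed



lemma dmult_pair: "dmult (P,Q) (U,V) = (P ** U, P ** V + Q ** U)"
  by (simp add: dmult_def)

lemma dmult_assoc: "dmult (dmult M N) K = dmult M (dmult N K)"
  by (cases M, cases N, cases K) (simp add: dmult_def matrix_add_ldistrib madd_r matrix_mul_assoc add_ac)

lemma dmult_1: "dmult M (mat 1, 0) = M" "dmult (mat 1, 0) M = M"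
  by (cases M; simp add: dmult_def)+

lemma dpow_Suc2: "dpow M (Suc k) = dmult (dpow M k) M"
proof (induction k)
  case 0 then show ?case by (simp add: dmult_1)
next
  case (Suc k)
  have "dpow M (Suc (Suc k)) = dmult M (dmult (dpow M k) M)" using Suc by simp
  also have "\<dots> = dmult (dpow M (Suc k)) M" by (simp add: dmult_assoc)
  finally show ?case .
qed

lemma dmultv_dmult: "dmultv (dmult M N) z = dmultv M (dmultv N z)"
  by (simp add: dmultv_def dmult_def matrix_vector_mul_assoc[symmetric] matrix_vector_right_distrib
      matrix_vector_mult_add_rdistrib add_ac)

lemma drange_mono: "drange M (Suc k) \<subseteq> drange M k"
proof
  fix y assume "y \<in> drange M (Suc k)"
  then obtain z where "y = dmultv (dpow M (Suc k)) z" unfolding drange_def by blast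
  then have "y = dmultv (dpow M k) (dmultv M z)" by (simp only: dpow_Suc2 dmultv_dmult)
  then show "y \<in> drange M k" unfolding drange_def by blast
qed

lemma linear_dmultv: "linear (dmultv N)"
  by (rule linearI) (simp_all add: dmultv_def algebra_simps)

lemma subspace_drange: "subspace (drange M k)"
  unfolding drange_def by (rule linear_subspace_image[OF linear_dmultv subspace_UNIV])

lemma dual_index_exists: "\<exists>k. drange M k = drange M (Suc k)"
proof (rule ccontr)
  assume ne: "\<not> ?thesis"
  have lt: "dim (drange M (Suc k)) < dim (drange M k)" for k
  proof (rule ccontr)
    assume "\<not> dim (drange M (Suc k)) < dim (drange M k)"
    then have "drange M (Suc k) = drange M k"
      by (intro subspace_dim_equal[OF subspace_drange subspace_drange drange_mono]) simp
    then show False using ne by metis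
  qed
  have "dim (drange M j) + j \<le> dim (drange M 0)" for j
  proof (induction j)
    case 0 then show ?case by simp
  next
    case (Suc j) then show ?case using lt[of j] by simp
  qed
  from this[of "Suc (dim (drange M 0))"] show False by simp
qed

definition Ssum :: "'n::finite rmat \<Rightarrow> 'n rmat \<Rightarrow> nat \<Rightarrow> 'n rmat" where
  "Ssum A B k = (\<Sum>i = 0..<k. mpow A (k - 1 - i) ** B ** mpow A i)"

lemma Ssum_Suc: "Ssum A B (Suc k) = A ** Ssum A B k + B ** mpow A k"
proof -
  have "Ssum A B (Suc k) = (\<Sum>i = 0..<k. mpow A (k - i) ** B ** mpow A i) + B ** mpow A k"
    unfolding Ssum_def by simp
  also have "(\<Sum>i = 0..<k. mpow A (k - i) ** B ** mpow A i)
      = (\<Sum>i = 0..<k. A ** (mpow A (k - 1 - i) ** B ** mpow A i))"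
  proof (rule sum.cong)
    fix i assume "i \<in> {0..<k}"
    then have "k - i = Suc (k - 1 - i)" by auto
    then show "mpow A (k - i) ** B ** mpow A i = A ** (mpow A (k - 1 - i) ** B ** mpow A i)"
      by (simp add: matrix_mul_assoc)
  qed simp
  also have "\<dots> = A ** Ssum A B k" unfolding Ssum_def by (simp add: msum_l)
  finally show ?thesis .
qed

lemma dpow_AB: "dpow (A, B) k = (mpow A k, Ssum A B k)"
  by (induction k) (simp_all add: dmult_def Ssum_Suc, simp add: Ssum_def)


lemma real_range:
  assumes "drange (A, B) k = drange (A, B) (Suc k)"
  shows "RG (mpow A k) = RG (mpow A (Suc k))"
proof
  show "RG (mpow A (Suc k)) \<subseteq> RG (mpow A k)" unfolding mpow_Suc2 by (rule RG_mult)
next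
  show "RG (mpow A k) \<subseteq> RG (mpow A (Suc k))"
  proof
    fix y assume "y \<in> RG (mpow A k)"
    then obtain w where y: "y = mpow A k *v w" unfolding RG_def by blast
    have "dmultv (dpow (A, B) k) (w, 0) \<in> drange (A, B) k" unfolding drange_def by simp
    then have "dmultv (dpow (A, B) k) (w, 0) \<in> drange (A, B) (Suc k)" using assms by simp
    then obtain z where z: "dmultv (dpow (A, B) k) (w, 0) = dmultv (dpow (A, B) (Suc k)) z"
      unfolding drange_def by blast
    have "fst (dmultv (dpow (A, B) k) (w, 0)) = fst (dmultv (dpow (A, B) (Suc k)) z)" using z by simp
    then have "y = mpow A (Suc k) *v fst z" using y by (simp only: dpow_AB dmultv_def fst_conv)
    then show "y \<in> RG (mpow A (Suc k))" unfolding RG_def by blast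
  qed
qed

lemma drazin_char:
  assumes "RG (mpow A k) = RG (mpow A (Suc k))"
  shows "real_index A \<le> k" and "Pd (real_index A) (Abs_sq A) (Abs_sq (drazin A))"
proof -
  let ?P = "\<lambda>k. range (\<lambda>z. mpow A k *v z) = range (\<lambda>z. mpow A (Suc k) *v z)"
  have Pk: "?P k" using assms by (simp add: RG_def)
  show "real_index A \<le> k" unfolding real_index_def by (rule Least_le[of ?P, OF Pk])
  define m where "m = real_index A"
  have "?P m" unfolding m_def real_index_def by (rule LeastI[of ?P, OF Pk])
  then have Pm: "RG (mpow A m) = RG (mpow A (Suc m))" by (simp add: RG_def)
  obtain u where u: "mpow A m = mpow A (Suc m) ** u" using RG_factor[of "mpow A m" "mpow A (Suc m)"] Pm by auto
  obtain v where v: "mpow A m = v ** mpow A (Suc m)" using left_factor[OF Pm] by auto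
  have "\<exists>z. Pd m (Abs_sq A) z"
  proof (rule Pd_exists)
    show "Abs_sq A ^ m = Abs_sq A ^ Suc m * Abs_sq u" using u by (simp only: sq_pow sq_mult)
    show "Abs_sq A ^ m = Abs_sq v * Abs_sq A ^ Suc m" using v by (simp only: sq_pow sq_mult)
  qed
  then obtain z where z: "Pd m (Abs_sq A) z" by blast
  define Z where "Z = Rep_sq z"
  have zZ: "z = Abs_sq Z" unfolding Z_def by (simp add: Rep_sq_inverse)
  have PZ: "mpow A m ** Z ** A = mpow A m \<and> Z ** A ** Z = Z \<and> A ** Z = Z ** A"
    using z zZ Pd_mat by metis
  have "drazin A = Z"
    unfolding drazin_def m_def[symmetric]
  proof (rule the_equality)
    show "mpow A m ** Z ** A = mpow A m \<and> Z ** A ** Z = Z \<and> A ** Z = Z ** A" by (rule PZ)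
  next
    fix X assume "mpow A m ** X ** A = mpow A m \<and> X ** A ** X = X \<and> A ** X = X ** A"
    then have "Pd m (Abs_sq A) (Abs_sq X)" by (simp only: Pd_mat)
    then have "Abs_sq X = Abs_sq Z" using z zZ Pd_unique by metis
    then show "X = Z" by (simp add: sq_inj)
  qed
  then show "Pd (real_index A) (Abs_sq A) (Abs_sq (drazin A))" using z zZ m_def by simp
qed

lemma grp_aux: "(a + (b + c) = s) \<longleftrightarrow> (a + b + (c - s) = (0::'a::ab_group_add))"
  by (metis add.assoc add_diff_eq eq_iff_diff_eq_0)

theorem mainTheorem1:
  fixes A B X R :: "real^'n^'n" and k :: nat
  assumes "dual_index (A, B) = k"
  shows "is_DDGI (A, B) (X, R) \<longleftrightarrow>
           (X = drazin A
            \<and> mpow A k ** drazin A ** B + mpow A k ** R ** A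
                + (\<Sum>i = 0..<k. mpow A (k - 1 - i) ** B ** mpow A i) ** (drazin A ** A - mat 1) = 0
            \<and> R = drazin A ** A ** R + drazin A ** B ** drazin A + R ** A ** drazin A
            \<and> A ** R + B ** drazin A = R ** A + drazin A ** B)"
proof -
  have dk: "drange (A, B) k = drange (A, B) (Suc k)"
    unfolding assms[symmetric] dual_index_def by (rule LeastI_ex[OF dual_index_exists])
  note rr = real_range[OF dk]
  have mk: "real_index A \<le> k" and Pm: "Pd (real_index A) (Abs_sq A) (Abs_sq (drazin A))"
    using drazin_char[OF rr] by auto
  have "Pd (real_index A + (k - real_index A)) (Abs_sq A) (Abs_sq (drazin A))"
    by (rule Pd_mono[OF Pm])
  then have Pk: "Pd k (Abs_sq A) (Abs_sq (drazin A))" using mk by simp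
  have real_iff: "(mpow A k ** X ** A = mpow A k \<and> X ** A ** X = X \<and> A ** X = X ** A)
      \<longleftrightarrow> X = drazin A"
  proof
    assume "mpow A k ** X ** A = mpow A k \<and> X ** A ** X = X \<and> A ** X = X ** A"
    then have "Pd k (Abs_sq A) (Abs_sq X)" by (simp only: Pd_mat)
    then have "Abs_sq X = Abs_sq (drazin A)" using Pk Pd_unique by metis
    then show "X = drazin A" by (simp add: sq_inj)
  next
    assume "X = drazin A"
    then show "mpow A k ** X ** A = mpow A k \<and> X ** A ** X = X \<and> A ** X = X ** A"
      using Pk by (simp only: Pd_mat)
  qed
  define S where "S = Ssum A B k"
  have e1: "(mpow A k ** X ** B + (mpow A k ** R + S ** X) ** A = S) \<longleftrightarrow>
      (mpow A k ** X ** B + mpow A k ** R ** A + S ** (X ** A - mat 1) = 0)"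
    by (simp only: madd_r mdiff_l matrix_mul_rid matrix_mul_assoc grp_aux)
  have e2: "(X ** A ** R + (X ** B + R ** A) ** X = R) \<longleftrightarrow>
      (R = X ** A ** R + X ** B ** X + R ** A ** X)"
    by (simp only: madd_r add.assoc eq_commute)
  have e3: "(A ** R + B ** X = X ** B + R ** A) \<longleftrightarrow> (A ** R + B ** X = R ** A + X ** B)"
    by (simp only: add.commute)
  have D: "is_DDGI (A, B) (X, R) \<longleftrightarrow>
      ((mpow A k ** X ** A = mpow A k \<and> X ** A ** X = X \<and> A ** X = X ** A)
       \<and> (mpow A k ** X ** B + mpow A k ** R ** A + S ** (X ** A - mat 1) = 0)
       \<and> (R = X ** A ** R + X ** B ** X + R ** A ** X)
       \<and> (A ** R + B ** X = R ** A + X ** B))"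
    unfolding is_DDGI_def Let_def assms dpow_AB dmult_pair prod.inject S_def[symmetric]
      e1[symmetric] e2[symmetric] e3[symmetric] by blast
  show ?thesis unfolding D real_iff S_def Ssum_def by blast
qed

end
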